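(* Let $G$ be a finite group and $H$ a normal subgroup of $G$. Suppose that $|H|$ and $|G/H|$ are odd and that both $H$ and the quotient group $G/H$ are symmetric harmonious. Then $G$ is symmetric harmonious.
   Context: Let $G$ be a finite group of order $\ell$ with identity $1_G$. A harmonious sequence in $G$ is an ordering $g_0,g_1,\ldots,g_{\ell-1}$ of all the elements of $G$ such that the consecutive products $g_0g_1, g_1g_2, \ldots, g_{\ell-2}g_{\ell-1}, g_{\ell-1}g_0$ are also all the elements of $G$, each appearing exactly once. $G$ is called symmetric harmonious if it admits a harmonious sequence $g_0,\ldots,g_{\ell-1}$ that additionally satisfies $g_i g_{\ell-i}=1_G$ for all $1\le i\le \ell-1$. *)

theory Defs
  imports "HOL-Algebra.Algebra"
begin

definition harmonious_seq :: "('a, 'b) monoid_scheme \<Rightarrow> (nat \<Rightarrow> 'a) \<Rightarrow> bool" where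
  "harmonious_seq G g \<longleftrightarrow>
     (let l = card (carrier G) in
       bij_betw g {0..<l} (carrier G) \<and>
       bij_betw (\<lambda>i. g i \<otimes>\<^bsub>G\<^esub> g ((i + 1) mod l)) {0..<l} (carrier G))"

definition symmetric_harmonious :: "('a, 'b) monoid_scheme \<Rightarrow> bool" where
  "symmetric_harmonious G \<longleftrightarrow>
     (\<exists>g. harmonious_seq G g \<and>
        (\<forall>i. 1 \<le> i \<and> i \<le> card (carrier G) - 1 \<longrightarrow>
              g i \<otimes>\<^bsub>G\<^esub> g (card (carrier G) - i) = \<one>\<^bsub>G\<^esub>))"

end

theory Submission
  imports Defs
begin

lemma (in group) odd_sq_one:
  assumes "odd (order G)" "x \<in> carrier G" "x \<otimes> x = \<one>"
  shows "x = \<one>"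
proof -
  obtain q where o: "order G = 2*q+1" using assms(1) oddE by blast
  have x2: "x [^] (2::nat) = \<one>" using assms by (simp add: numeral_2_eq_2)
  have "\<one> = x [^] order G" using pow_order_eq_1 assms by simp
  also have "\<dots> = x [^] (2*q) \<otimes> x [^] (1::nat)" using o assms nat_pow_mult by simp
  also have "\<dots> = (x [^] (2::nat)) [^] q \<otimes> x" using assms by (simp add: nat_pow_pow)
  also have "\<dots> = x" using x2 assms by simp
  finally show ?thesis by simp
qed

lemma (in group) odd_sq_inj:
  assumes "odd (order G)" "x \<in> carrier G" "y \<in> carrier G" "x \<otimes> x = y \<otimes> y"
  shows "x = y"
proof -
  obtain q where o: "order G = 2*q+1" using assms(1) oddE by blast
  have key: "z = (z \<otimes> z) [^] (q+1)" if z: "z \<in> carrier G" for z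
  proof -
    have e1: "z [^] order G \<otimes> z = z" using pow_order_eq_1 z by simp
    have e2: "z [^] order G \<otimes> z = z [^] (order G + 1)"
      by (metis nat_pow_Suc Suc_eq_plus1)
    have e3: "(z [^] (2::nat)) [^] (q+1) = z [^] (2*(q+1))"
      by (rule nat_pow_pow[OF z])
    have e4: "2*(q+1) = order G + 1" using o by simp
    have e5: "z [^] (2::nat) = z \<otimes> z" using z by (simp add: numeral_2_eq_2)
    have "z = z [^] (order G + 1)" using e2 unfolding e1 .
    also have "\<dots> = z [^] (2*(q+1))" unfolding e4 ..
    also have "\<dots> = (z \<otimes> z) [^] (q+1)" unfolding e3[symmetric] e5 ..
    finally show ?thesis .
  qed
  show ?thesis using key[OF assms(2)] key[OF assms(3)] assms(4) by simp
qed

lemma sym_harm_zero: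
  assumes "group K" "finite (carrier K)" "odd (card (carrier K))"
    and "harmonious_seq K g"
    and "\<forall>i. 1 \<le> i \<and> i \<le> card (carrier K) - 1 \<longrightarrow>
              g i \<otimes>\<^bsub>K\<^esub> g (card (carrier K) - i) = \<one>\<^bsub>K\<^esub>"
  shows "g 0 = \<one>\<^bsub>K\<^esub>"
proof -
  interpret K: group K by fact
  define l where "l = card (carrier K)"
  have bij: "bij_betw g {0..<l} (carrier K)" using assms(4) unfolding harmonious_seq_def l_def Let_def by blast
  have lpos: "l > 0" using assms(3) l_def by (cases l) auto
  have g0: "g 0 \<in> carrier K" using bij lpos bij_betwE by fastforce
  have "inv\<^bsub>K\<^esub> (g 0) \<in> g ` {0..<l}" using bij g0 bij_betw_imp_surj_on by fastforce
  then obtain i where i: "i < l" "inv\<^bsub>K\<^esub> (g 0) = g i" by auto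
  have gi: "\<And>j. j < l \<Longrightarrow> g j \<in> carrier K" using bij bij_betwE by fastforce
  have inj: "inj_on g {0..<l}" using bij bij_betw_imp_inj_on by blast
  have "i = 0"
  proof (rule ccontr)
    assume "i \<noteq> 0"
    then have "g i \<otimes>\<^bsub>K\<^esub> g (l - i) = \<one>\<^bsub>K\<^esub>" using assms(5) i unfolding l_def by auto
    then have "inv\<^bsub>K\<^esub> (g i) = g (l - i)" using gi i K.inv_equality K.inv_comm
      by (metis diff_less lpos \<open>i \<noteq> 0\<close> not_gr_zero)
    then have "g 0 = g (l - i)" using i g0 by (metis K.inv_inv)
    then have "0 = l - i" using inj i \<open>i \<noteq> 0\<close> lpos by (auto simp: inj_on_def)
    then show False using i by simp
  qed
  then have "inv\<^bsub>K\<^esub> (g 0) = g 0" using i by simp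
  then have sq: "g 0 \<otimes>\<^bsub>K\<^esub> g 0 = \<one>\<^bsub>K\<^esub>" using g0 by (metis K.r_inv)
  have "odd (order K)" using assms(3) unfolding order_def .
  then show ?thesis by (rule K.odd_sq_one[OF _ g0 sq])
qed

lemma (in group) canc1: "x \<in> carrier G \<Longrightarrow> y \<in> carrier G \<Longrightarrow> x \<otimes> (inv x \<otimes> y) = y"
  by (simp add: m_assoc[symmetric])

lemma (in group) canc2: "x \<in> carrier G \<Longrightarrow> y \<in> carrier G \<Longrightarrow> inv x \<otimes> (x \<otimes> y) = y"
  by (simp add: m_assoc[symmetric])

lemma (in group) cancel_mid:
  assumes "aa \<otimes> uu \<otimes> bb = aa \<otimes> vv \<otimes> bb" "aa \<in> carrier G" "uu \<in> carrier G" "vv \<in> carrier G" "bb \<in> carrier G"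
  shows "uu = vv"
proof -
  have "aa \<otimes> uu = aa \<otimes> vv" using assms r_cancel m_closed by metis
  then show ?thesis using assms l_cancel by metis
qed

lemma (in group) cancel_left:
  assumes "aa \<otimes> uu = aa \<otimes> vv" "aa \<in> carrier G" "uu \<in> carrier G" "vv \<in> carrier G"
  shows "uu = vv"
  using assms l_cancel by metis

primrec Pp :: "('a, 'b) monoid_scheme \<Rightarrow> (nat \<Rightarrow> 'a) \<Rightarrow> nat \<Rightarrow> 'a" where
  "Pp G a 0 = \<one>\<^bsub>G\<^esub>"
| "Pp G a (Suc j) = Pp G a j \<otimes>\<^bsub>G\<^esub> a (Suc j)"

lemma divmod_lin: "j < (n::nat) \<Longrightarrow> (j + n*t) mod n = j \<and> (j + n*t) div n = t"
  by simp

lemma kdecomp: "(k::nat) < n*m \<Longrightarrow> k mod n < n \<and> k div n < m \<and> k = k mod n + n * (k div n)"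
proof -
  assume k: "k < n*m"
  then have "n > 0" by (cases n) auto
  moreover have "k div n < m" using k by (metis div_less_iff_less_mult mult.commute \<open>n > 0\<close>)
  ultimately show ?thesis by simp
qed

lemma next_idx:
  fixes n m k :: nat assumes "k < n*m"
  shows "((k+1) mod (n*m)) mod n = (if k mod n < n - 1 then k mod n + 1 else 0) \<and>
         ((k+1) mod (n*m)) div n = (if k mod n < n - 1 then k div n else (k div n + 1) mod m)"
proof -
  define j where "j = k mod n"
  define t where "t = k div n"
  have d: "j < n" "t < m" "k = j + n*t" using kdecomp[OF assms] j_def t_def by auto
  show ?thesis
  proof (cases "j < n - 1")
    case True
    have "k + 1 = (j+1) + n*t" using d by simp
    moreover have "(j+1) + n*t < n*m"
    proof -
      have "(j+1) + n*t < n + n*t" using True by simp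
      also have "n + n*t = n*(t+1)" by simp
      also have "\<dots> \<le> n*m" using d(2) by (intro mult_le_mono2) simp
      finally show ?thesis .
    qed
    ultimately show ?thesis using True divmod_lin[of "j+1" n t] j_def t_def by simp
  next
    case False
    then have jn: "j = n - 1" using d by simp
    have npos: "n > 0" using d by simp
    have k1: "k + 1 = n*(t+1)" using d jn npos by (simp add: algebra_simps)
    show ?thesis
    proof (cases "t + 1 < m")
      case True
      have "n*(t+1) < n*m" using True npos by (intro mult_strict_left_mono) auto
      then show ?thesis using k1 False True j_def t_def npos by simp
    next
      case False2: False
      then have "t+1 = m" using d by simp
      then show ?thesis using k1 False j_def t_def npos by simp
    qed
  qed
qed

lemma sym_idx:
  fixes n m k :: nat assumes "k < n*m" "1 \<le> k"
  shows "(n*m - k) mod n = (if k mod n = 0 then 0 else n - k mod n) \<and>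
         (n*m - k) div n = (if k mod n = 0 then m - k div n else m - 1 - k div n)"
proof -
  define j where "j = k mod n"
  define t where "t = k div n"
  have d: "j < n" "t < m" "k = j + n*t" using kdecomp[OF assms(1)] j_def t_def by auto
  obtain u where u: "m = t + 1 + u" using d(2) less_imp_Suc_add by fastforce
  obtain v where v: "n = j + v" using d(1) less_imp_add_positive by blast
  have vp: "v > 0" using v d(1) by simp
  have nm: "n*m = n*t + n + n*u" unfolding u by (simp add: algebra_simps)
  show ?thesis
  proof (cases "j = 0")
    case True
    have "n*m - k = 0 + n*(u+1)" using nm d(3) True by simp
    moreover have "m - t = u + 1" using u by simp
    moreover have r: "(0 + n*(u+1)) mod n = 0 \<and> (0 + n*(u+1)) div n = u + 1"
      using divmod_lin[of 0 n "u+1"] d(1) by linarith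
    ultimately show ?thesis using True j_def t_def by simp
  next
    case False
    have "n*m - k = v + n*u" using nm d(3) v by simp
    moreover have "m - 1 - t = u" using u by simp
    moreover have "v < n" "n - j = v" using False v by auto
    moreover have r: "(v + n*u) mod n = v \<and> (v + n*u) div n = u"
      using divmod_lin[of v n u] \<open>v < n\<close> by blast
    ultimately show ?thesis using False j_def t_def by simp
  qed
qed

lemma bij_from_inj:
  assumes "inj_on f A" "f ` A \<subseteq> B" "card A = card B" "finite B"
  shows "bij_betw f A B"
  by (metis assms bij_betw_def card_image card_subset_eq)


theorem lemma1:
  fixes G (structure) and H :: "'a set"
  assumes "group G"
    and "finite (carrier G)"
    and "H \<lhd> G"
    and "odd (card H)"
    and "odd (card (carrier (G Mod H)))"
    and "symmetric_harmonious (G\<lparr>carrier := H\<rparr>)"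
    and "symmetric_harmonious (G Mod H)"
  shows "symmetric_harmonious G"
proof -
  interpret group G by fact
  interpret N: normal H G using assms(3) .
  define Q where "Q = G Mod H"
  interpret Q: group Q unfolding Q_def by (rule N.factorgroup_is_group)
  define K where "K = G\<lparr>carrier := H\<rparr>"
  interpret K: group K unfolding K_def by (rule subgroup.subgroup_is_group[OF N.subgroup_axioms assms(1)])
  have hom: "(\<lambda>x. H #> x) \<in> hom G Q" unfolding Q_def by (rule N.r_coset_hom_Mod)
  have gh: "group_hom G Q (\<lambda>x. H #> x)"
    unfolding group_hom_def group_hom_axioms_def using hom assms(1) Q.group_axioms by simp
  have hm: "\<And>x y. x \<in> carrier G \<Longrightarrow> y \<in> carrier G \<Longrightarrow> H #> (x \<otimes> y) = (H #> x) \<otimes>\<^bsub>Q\<^esub> (H #> y)"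
    using hom_mult[OF hom] by simp
  have hcar: "\<And>x. x \<in> carrier G \<Longrightarrow> H #> x \<in> carrier Q"
    unfolding Q_def carrier_FactGroup by simp
  have hone: "\<And>x. x \<in> H \<Longrightarrow> H #> x = \<one>\<^bsub>Q\<^esub>"
    unfolding Q_def one_FactGroup using N.rcos_const assms(1) by simp
  have hinv: "\<And>x. x \<in> carrier G \<Longrightarrow> H #> inv x = inv\<^bsub>Q\<^esub> (H #> x)"
    using group_hom.hom_inv[OF gh] by simp
  have finH: "finite H" using assms(2) N.subset finite_subset by blast
  define m where "m = card H"
  define n where "n = card (carrier Q)"
  define NN where "NN = card (carrier G)"
  have NN: "NN = n * m"
    using lagrange[OF N.subgroup_axioms] unfolding NN_def n_def m_def order_def Q_def FactGroup_def by simp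
  have modd: "odd m" using assms(4) m_def by simp
  have nodd: "odd n" using assms(5) n_def Q_def by simp
  obtain r where r: "n = 2*r+1" using nodd oddE by blast
  have mpos: "m > 0" using modd by (cases m) auto
  have npos: "n > 0" using r by simp
  have cardK: "card (carrier K) = m" unfolding K_def m_def by simp
  have ordK: "odd (order K)" unfolding order_def using cardK modd by simp
  obtain h where hh: "harmonious_seq K h"
     and hsym0: "\<forall>i. 1 \<le> i \<and> i \<le> card (carrier K) - 1 \<longrightarrow> h i \<otimes>\<^bsub>K\<^esub> h (card (carrier K) - i) = \<one>\<^bsub>K\<^esub>"
    using assms(6) unfolding symmetric_harmonious_def K_def by blast
  have h0: "h 0 = \<one>"
    using sym_harm_zero[OF K.group_axioms _ _ hh hsym0] finH cardK modd unfolding K_def by simp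
  have hbij: "bij_betw h {0..<m} H" using hh unfolding harmonious_seq_def cardK[symmetric] Let_def
    by (simp add: K_def)
  have hprod: "bij_betw (\<lambda>i. h i \<otimes> h ((i + 1) mod m)) {0..<m} H"
    using hh unfolding harmonious_seq_def cardK[symmetric] Let_def by (simp add: K_def)
  have hsym: "\<And>i. 1 \<le> i \<Longrightarrow> i < m \<Longrightarrow> h i \<otimes> h (m - i) = \<one>"
    using hsym0 cardK unfolding K_def by auto
  have hH: "\<And>i. i < m \<Longrightarrow> h i \<in> H" using hbij bij_betwE by fastforce
  have hC: "\<And>i. i < m \<Longrightarrow> h i \<in> carrier G" using hH N.subset by blast
  have hinj: "inj_on h {0..<m}" using hbij bij_betw_imp_inj_on by blast
  have hprodinj: "inj_on (\<lambda>i. h i \<otimes> h ((i + 1) mod m)) {0..<m}" using hprod bij_betw_imp_inj_on by blast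
  have sqinj: "\<And>u v. u \<in> H \<Longrightarrow> v \<in> H \<Longrightarrow> u \<otimes> u = v \<otimes> v \<Longrightarrow> u = v"
  proof -
    fix u v assume uv: "u \<in> H" "v \<in> H" "u \<otimes> u = v \<otimes> v"
    have "u \<otimes>\<^bsub>K\<^esub> u = v \<otimes>\<^bsub>K\<^esub> v" "u \<in> carrier K" "v \<in> carrier K"
      using uv unfolding K_def by simp_all
    then show "u = v" using K.odd_sq_inj[OF ordK] by blast
  qed
  obtain c where cc: "harmonious_seq Q c"
     and csym0: "\<forall>i. 1 \<le> i \<and> i \<le> n - 1 \<longrightarrow> c i \<otimes>\<^bsub>Q\<^esub> c (n - i) = \<one>\<^bsub>Q\<^esub>"
    using assms(7) unfolding symmetric_harmonious_def Q_def n_def by blast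
  have finQ: "finite (carrier Q)" using n_def npos card_ge_0_finite by blast
  have c0: "c 0 = \<one>\<^bsub>Q\<^esub>"
    using sym_harm_zero[OF Q.group_axioms finQ _ cc] csym0 nodd n_def by simp
  have cbij: "bij_betw c {0..<n} (carrier Q)" using cc unfolding harmonious_seq_def n_def Let_def by simp
  have cprodinj: "inj_on (\<lambda>i. c i \<otimes>\<^bsub>Q\<^esub> c ((i + 1) mod n)) {0..<n}"
    using cc bij_betw_imp_inj_on unfolding harmonious_seq_def n_def Let_def by blast
  have csym: "\<And>i. 1 \<le> i \<Longrightarrow> i < n \<Longrightarrow> c i \<otimes>\<^bsub>Q\<^esub> c (n - i) = \<one>\<^bsub>Q\<^esub>"
    using csym0 by auto
  have cQ: "\<And>i. i < n \<Longrightarrow> c i \<in> carrier Q" using cbij bij_betwE by fastforce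
  have cinj: "inj_on c {0..<n}" using cbij bij_betw_imp_inj_on by blast
  define rep where "rep C = (SOME x. x \<in> carrier G \<and> C = H #> x)" for C
  have rep: "\<And>C. C \<in> carrier Q \<Longrightarrow> rep C \<in> carrier G \<and> C = H #> rep C"
  proof -
    fix C assume "C \<in> carrier Q"
    then have "\<exists>x. x \<in> carrier G \<and> C = H #> x" unfolding Q_def carrier_FactGroup by auto
    then show "rep C \<in> carrier G \<and> C = H #> rep C" unfolding rep_def by (rule someI_ex)
  qed
  define a where "a j = (if j = 0 then \<one> else if j \<le> r then rep (c j) else inv (rep (c (n - j))))" for j
  have aC: "\<And>j. a j \<in> carrier G"
  proof -
    fix j
    show "a j \<in> carrier G"
    proof (cases "j = 0")
      case False
      then have "n - j < n" using npos by simp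
      moreover have "j \<le> r \<Longrightarrow> j < n" using r by simp
      ultimately show ?thesis using rep cQ unfolding a_def by auto
    qed (simp add: a_def)
  qed
  have a0: "a 0 = \<one>" by (simp add: a_def)
  have acos: "\<And>j. j < n \<Longrightarrow> H #> a j = c j"
  proof -
    fix j assume j: "j < n"
    show "H #> a j = c j"
    proof (cases "j = 0")
      case True
      then show ?thesis using c0 hone a0 N.one_closed by simp
    next
      case False
      show ?thesis
      proof (cases "j \<le> r")
        case True
        then show ?thesis using False rep cQ j unfolding a_def by simp
      next
        case jr: False
        define i where "i = n - j"
        have i: "1 \<le> i" "i < n" "n - i = j" using j False i_def by auto
        have ci: "c i = H #> rep (c i)" "rep (c i) \<in> carrier G" using rep cQ i by auto
        have "c i \<otimes>\<^bsub>Q\<^esub> c j = \<one>\<^bsub>Q\<^esub>" using csym[OF i(1,2)] i(3) by simp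
        then have "c j \<otimes>\<^bsub>Q\<^esub> c i = \<one>\<^bsub>Q\<^esub>" using Q.inv_comm cQ i j by blast
        then have "inv\<^bsub>Q\<^esub> (c i) = c j" using Q.inv_equality cQ i j by blast
        moreover have "H #> a j = inv\<^bsub>Q\<^esub> (c i)"
          unfolding a_def using False jr i_def hinv ci by simp
        ultimately show ?thesis by simp
      qed
    qed
  qed
  have ainv: "\<And>j. 1 \<le> j \<Longrightarrow> j < n \<Longrightarrow> a (n - j) = inv (a j)"
  proof -
    fix j assume j: "1 \<le> j" "j < n"
    show "a (n - j) = inv (a j)"
    proof (cases "j \<le> r")
      case True
      then have "\<not> n - j \<le> r" "n - j \<noteq> 0" "n - (n - j) = j" using r j by auto
      then show ?thesis using True j unfolding a_def by simp
    next
      case False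
      then have "n - j \<le> r" "n - j \<noteq> 0" using r j by auto
      moreover have "rep (c (n - j)) \<in> carrier G" using rep cQ j by simp
      ultimately show ?thesis using False j unfolding a_def by simp
    qed
  qed
  define P where "P = Pp G a"
  have PC: "\<And>j. P j \<in> carrier G" unfolding P_def
  proof -
    fix j show "Pp G a j \<in> carrier G" by (induction j) (simp_all add: aC)
  qed
  have P0: "P 0 = \<one>" unfolding P_def by simp
  have PS: "\<And>j. P (Suc j) = P j \<otimes> a (Suc j)" unfolding P_def by simp
  have Psym: "\<And>i. i \<le> r \<Longrightarrow> P (r + i) = P (r - i)"
  proof -
    fix i show "i \<le> r \<Longrightarrow> P (r + i) = P (r - i)"
    proof (induction i)
      case 0 then show ?case by simp
    next
      case (Suc i)
      have IH: "P (r + i) = P (r - i)" using Suc by simp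
      have e1: "Suc (r + i) = n - (r - i)" using r Suc.prems by simp
      have ai0: "a (n - (r - i)) = inv (a (r - i))" by (rule ainv) (use r Suc.prems in auto)
      have ai: "a (Suc (r + i)) = inv (a (r - i))" using ai0 unfolding e1[symmetric] .
      have e2: "r - i = Suc (r - Suc i)" using Suc.prems by simp
      have P3: "P (r - i) = P (r - Suc i) \<otimes> a (r - i)" by (simp only: e2 PS)
      have "P (r + Suc i) = P (Suc (r + i))" by simp
      also have "\<dots> = P (r + i) \<otimes> a (Suc (r + i))" by (rule PS)
      also have "\<dots> = P (r - i) \<otimes> inv (a (r - i))" by (simp only: IH ai)
      also have "\<dots> = P (r - Suc i) \<otimes> a (r - i) \<otimes> inv (a (r - i))" by (simp only: P3)
      also have "\<dots> = P (r - Suc i)" using PC aC by (simp add: m_assoc)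
      finally show ?case .
    qed
  qed
  have Pn1: "P (n - 1) = \<one>" using Psym[of r] r P0 by (simp add: mult_2)
  have Pnj: "\<And>j. 1 \<le> j \<Longrightarrow> j < n \<Longrightarrow> P (n - j) = P (j - 1)"
  proof -
    fix j assume j: "1 \<le> j" "j < n"
    show "P (n - j) = P (j - 1)"
    proof (cases "j \<le> r + 1")
      case True
      define i where "i = r + 1 - j"
      have "i \<le> r" "n - j = r + i" "j - 1 = r - i" using True r j i_def by auto
      then show ?thesis using Psym[of i] by simp
    next
      case False
      define i where "i = j - r - 1"
      have "i \<le> r" "n - j = r - i" "j - 1 = r + i" using False r j i_def by auto
      then show ?thesis using Psym[of i] by simp
    qed
  qed
  define s where "s j t = (if j \<le> r then t else (t + 1) mod m)" for j t :: nat
  define x where "x j t = h (s j t)" for j t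
  have sm: "\<And>j t. t < m \<Longrightarrow> s j t < m" unfolding s_def using mpos by simp
  have sinj: "\<And>j t t'. t < m \<Longrightarrow> t' < m \<Longrightarrow> s j t = s j t' \<Longrightarrow> t = t'"
  proof -
    fix j t t' assume tt: "t < m" "t' < m" "s j t = s j t'"
    have md: "(u + 1) mod m = (if u + 1 = m then 0 else u + 1)" if "u < m" for u
      using mod_Suc[of u m] that by simp
    show "t = t'"
    proof (cases "j \<le> r")
      case True then show ?thesis using tt(3) unfolding s_def by simp
    next
      case False
      then have "(t + 1) mod m = (t' + 1) mod m" using tt(3) unfolding s_def by simp
      then show ?thesis using md[OF tt(1)] md[OF tt(2)] tt(1,2) by (auto split: if_splits)
    qed
  qed
  have xH: "\<And>j t. t < m \<Longrightarrow> x j t \<in> H" unfolding x_def using hH sm by simp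
  have xC: "\<And>j t. t < m \<Longrightarrow> x j t \<in> carrier G" using xH N.subset by blast
  have xinj: "\<And>j t t'. t < m \<Longrightarrow> t' < m \<Longrightarrow> x j t = x j t' \<Longrightarrow> t = t'"
    unfolding x_def using hinj sm sinj by (metis atLeastLessThan_iff inj_on_def zero_le)
  define F where "F j t = a j \<otimes> inv (P j) \<otimes> x j t \<otimes> P j" for j t
  have FC: "\<And>j t. t < m \<Longrightarrow> F j t \<in> carrier G" unfolding F_def using aC PC xC by simp
  have Fcos: "\<And>j t. j < n \<Longrightarrow> t < m \<Longrightarrow> H #> F j t = c j"
  proof -
    fix j t assume jt: "j < n" "t < m"
    have e: "F j t = a j \<otimes> (inv (P j) \<otimes> x j t \<otimes> P j)" unfolding F_def using aC PC xC jt by (simp add: m_assoc)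
    have cj: "inv (P j) \<otimes> x j t \<otimes> P j \<in> H" using N.inv_op_closed1 PC xH jt by simp
    have "H #> F j t = c j \<otimes>\<^bsub>Q\<^esub> \<one>\<^bsub>Q\<^esub>" unfolding e using hm aC PC xC jt acos hone cj by simp
    then show "H #> F j t = c j" using cQ jt by simp
  qed
  have Finj: "\<And>j j' t t'. j < n \<Longrightarrow> j' < n \<Longrightarrow> t < m \<Longrightarrow> t' < m \<Longrightarrow> F j t = F j' t' \<Longrightarrow> j = j' \<and> t = t'"
  proof -
    fix j j' t t' assume a: "j < n" "j' < n" "t < m" "t' < m" "F j t = F j' t'"
    have "c j = c j'" using Fcos a by metis
    then have jj: "j = j'" using cinj a by (auto simp: inj_on_def)
    have "(a j \<otimes> inv (P j)) \<otimes> x j t \<otimes> P j = (a j \<otimes> inv (P j)) \<otimes> x j t' \<otimes> P j"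
      using a(5) jj unfolding F_def by simp
    then have "x j t = x j t'" by (rule cancel_mid) (use aC PC xC a in auto)
    then show "j = j' \<and> t = t'" using jj xinj a by blast
  qed
  define g where "g k = F (k mod n) (k div n)" for k
  have kd: "\<And>k. k < NN \<Longrightarrow> k mod n < n \<and> k div n < m \<and> k = k mod n + n * (k div n)"
    using kdecomp NN by simp
  have gC: "\<And>k. k < NN \<Longrightarrow> g k \<in> carrier G" unfolding g_def using FC kd by simp
  have ginj: "inj_on g {0..<NN}"
  proof (rule inj_onI)
    fix k k' assume k: "k \<in> {0..<NN}" "k' \<in> {0..<NN}" "g k = g k'"
    have kk: "k mod n < n" "k div n < m" "k' mod n < n" "k' div n < m" using kd k by auto
    have "k mod n = k' mod n \<and> k div n = k' div n"
      using Finj[OF kk(1) kk(3) kk(2) kk(4)] k(3) unfolding g_def by blast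
    then show "k = k'" using kd k by (metis atLeastLessThan_iff)
  qed
  have gbij: "bij_betw g {0..<NN} (carrier G)"
    by (rule bij_from_inj[OF ginj]) (use gC assms(2) NN_def in auto)
  define Pr where "Pr j t = (if j < n - 1 then F j t \<otimes> F (j + 1) t else F j t \<otimes> F 0 ((t + 1) mod m))" for j t
  have gnext: "\<And>k. k < NN \<Longrightarrow> g k \<otimes> g ((k + 1) mod NN) = Pr (k mod n) (k div n)"
  proof -
    fix k assume k: "k < NN"
    have ni: "((k+1) mod NN) mod n = (if k mod n < n - 1 then k mod n + 1 else 0) \<and>
         ((k+1) mod NN) div n = (if k mod n < n - 1 then k div n else (k div n + 1) mod m)"
      using next_idx[of k n m] k NN by simp
    show "g k \<otimes> g ((k + 1) mod NN) = Pr (k mod n) (k div n)"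
    proof (cases "k mod n < n - 1")
      case True
      then have "((k+1) mod NN) mod n = k mod n + 1" "((k+1) mod NN) div n = k div n" using ni by auto
      then show ?thesis unfolding g_def Pr_def using True by simp
    next
      case False
      then have "((k+1) mod NN) mod n = 0" "((k+1) mod NN) div n = (k div n + 1) mod m" using ni by auto
      then show ?thesis unfolding g_def Pr_def using False by simp
    qed
  qed
  have PrC: "\<And>j t. t < m \<Longrightarrow> Pr j t \<in> carrier G" unfolding Pr_def using FC mpos by simp
  have Prcos: "\<And>j t. j < n \<Longrightarrow> t < m \<Longrightarrow> H #> Pr j t = c j \<otimes>\<^bsub>Q\<^esub> c ((j + 1) mod n)"
  proof -
    fix j t assume jt: "j < n" "t < m"
    show "H #> Pr j t = c j \<otimes>\<^bsub>Q\<^esub> c ((j + 1) mod n)"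
    proof (cases "j < n - 1")
      case True
      have e: "Pr j t = F j t \<otimes> F (j + 1) t" unfolding Pr_def using True by simp
      have e2: "(j + 1) mod n = j + 1" using True by simp
      have "H #> Pr j t = (H #> F j t) \<otimes>\<^bsub>Q\<^esub> (H #> F (j + 1) t)" unfolding e
        by (rule hm) (use FC jt in auto)
      also have "\<dots> = c j \<otimes>\<^bsub>Q\<^esub> c (j + 1)" using Fcos jt True by simp
      finally show ?thesis unfolding e2 .
    next
      case False
      have e: "Pr j t = F j t \<otimes> F 0 ((t + 1) mod m)" unfolding Pr_def using False by simp
      have "j + 1 = n" using False jt by simp
      then have e2: "(j + 1) mod n = 0" by simp
      have tm: "(t + 1) mod m < m" using mpos by simp
      have "H #> Pr j t = (H #> F j t) \<otimes>\<^bsub>Q\<^esub> (H #> F 0 ((t + 1) mod m))" unfolding e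
        by (rule hm) (use FC jt tm in auto)
      also have "\<dots> = c j \<otimes>\<^bsub>Q\<^esub> c 0" using Fcos[OF jt] Fcos[OF npos tm] by simp
      finally show ?thesis unfolding e2 .
    qed
  qed
  have Pr1: "\<And>j t. j < n - 1 \<Longrightarrow> t < m \<Longrightarrow> Pr j t = (a j \<otimes> inv (P j)) \<otimes> (x j t \<otimes> x (j + 1) t) \<otimes> (P j \<otimes> a (j + 1))"
  proof -
    fix j t assume jt: "j < n - 1" "t < m"
    have "P (j + 1) = P j \<otimes> a (j + 1)" using PS by simp
    then show "Pr j t = (a j \<otimes> inv (P j)) \<otimes> (x j t \<otimes> x (j + 1) t) \<otimes> (P j \<otimes> a (j + 1))"
      unfolding Pr_def F_def using jt aC PC xC by (simp add: m_assoc inv_mult_group canc1 canc2)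
  qed
  have Pr2: "\<And>t. t < m \<Longrightarrow> Pr (n - 1) t = a (n - 1) \<otimes> (x (n - 1) t \<otimes> h ((t + 1) mod m))"
  proof -
    fix t assume t: "t < m"
    have xh: "x 0 ((t + 1) mod m) = h ((t + 1) mod m)" unfolding x_def s_def by simp
    have tm: "(t + 1) mod m < m" using mpos by simp
    have e: "Pr (n - 1) t = F (n - 1) t \<otimes> F 0 ((t + 1) mod m)" unfolding Pr_def by simp
    have f1: "F (n - 1) t = a (n - 1) \<otimes> x (n - 1) t" unfolding F_def Pn1 using aC xC[OF t] by simp
    have f2: "F 0 ((t + 1) mod m) = h ((t + 1) mod m)" unfolding F_def P0 a0 xh using hC[OF tm] by simp
    show "Pr (n - 1) t = a (n - 1) \<otimes> (x (n - 1) t \<otimes> h ((t + 1) mod m))"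
      unfolding e f1 f2 using aC xC[OF t] hC[OF tm] by (simp add: m_assoc)
  qed
  have sqcase: "\<And>j t t'. t < m \<Longrightarrow> t' < m \<Longrightarrow> x j t \<otimes> x j t = x j t' \<otimes> x j t' \<Longrightarrow> t = t'"
  proof -
    fix j t t' assume a: "t < m" "t' < m" "x j t \<otimes> x j t = x j t' \<otimes> x j t'"
    have "x j t = x j t'" using sqinj[OF xH[OF a(1)] xH[OF a(2)] a(3)] .
    then show "t = t'" using xinj a(1,2) by blast
  qed
  have prcase: "\<And>t t'. t < m \<Longrightarrow> t' < m \<Longrightarrow> h t \<otimes> h ((t + 1) mod m) = h t' \<otimes> h ((t' + 1) mod m) \<Longrightarrow> t = t'"
  proof -
    fix t t' assume a: "t < m" "t' < m" "h t \<otimes> h ((t + 1) mod m) = h t' \<otimes> h ((t' + 1) mod m)"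
    show "t = t'" using inj_onD[OF hprodinj, of t t'] a by simp
  qed
  have core1: "\<And>j t t'. j < n - 1 \<Longrightarrow> t < m \<Longrightarrow> t' < m \<Longrightarrow> x j t \<otimes> x (j + 1) t = x j t' \<otimes> x (j + 1) t' \<Longrightarrow> t = t'"
  proof -
    fix j t t' assume a: "j < n - 1" "t < m" "t' < m" "x j t \<otimes> x (j + 1) t = x j t' \<otimes> x (j + 1) t'"
    show "t = t'"
    proof (cases "j + 1 \<le> r")
      case True
      then have "\<And>u. x (j + 1) u = x j u" unfolding x_def s_def by auto
      then show ?thesis using a sqcase by metis
    next
      case False
      show ?thesis
      proof (cases "j \<le> r")
        case True
        then have "x j t = h t" "x j t' = h t'" "x (j + 1) t = h ((t + 1) mod m)" "x (j + 1) t' = h ((t' + 1) mod m)"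
          using False unfolding x_def s_def by auto
        then show ?thesis using a prcase by metis
      next
        case False2: False
        then have "\<And>u. x (j + 1) u = x j u" unfolding x_def s_def using False by auto
        then show ?thesis using a sqcase by metis
      qed
    qed
  qed
  have core2: "\<And>t t'. t < m \<Longrightarrow> t' < m \<Longrightarrow> x (n - 1) t \<otimes> h ((t + 1) mod m) = x (n - 1) t' \<otimes> h ((t' + 1) mod m) \<Longrightarrow> t = t'"
  proof -
    fix t t' assume a: "t < m" "t' < m" "x (n - 1) t \<otimes> h ((t + 1) mod m) = x (n - 1) t' \<otimes> h ((t' + 1) mod m)"
    show "t = t'"
    proof (cases "n - 1 \<le> r")
      case True
      then have "x (n - 1) t = h t" "x (n - 1) t' = h t'" unfolding x_def s_def by auto
      then show ?thesis using a prcase by metis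
    next
      case False
      then have "\<And>u. x (n - 1) u = h ((u + 1) mod m)" unfolding x_def s_def by auto
      then show ?thesis using a sqcase by metis
    qed
  qed
  have Prinj: "\<And>j j' t t'. j < n \<Longrightarrow> j' < n \<Longrightarrow> t < m \<Longrightarrow> t' < m \<Longrightarrow> Pr j t = Pr j' t' \<Longrightarrow> j = j' \<and> t = t'"
  proof -
    fix j j' t t' assume a: "j < n" "j' < n" "t < m" "t' < m" "Pr j t = Pr j' t'"
    have "c j \<otimes>\<^bsub>Q\<^esub> c ((j + 1) mod n) = c j' \<otimes>\<^bsub>Q\<^esub> c ((j' + 1) mod n)" using Prcos a by metis
    then have jj: "j = j'" using cprodinj a by (auto simp: inj_on_def)
    show "j = j' \<and> t = t'"
    proof (cases "j < n - 1")
      case True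
      have "(a j \<otimes> inv (P j)) \<otimes> (x j t \<otimes> x (j + 1) t) \<otimes> (P j \<otimes> a (j + 1))
          = (a j \<otimes> inv (P j)) \<otimes> (x j t' \<otimes> x (j + 1) t') \<otimes> (P j \<otimes> a (j + 1))"
        using Pr1 True a jj by metis
      then have "x j t \<otimes> x (j + 1) t = x j t' \<otimes> x (j + 1) t'"
        by (rule cancel_mid) (use aC PC xC a in auto)
      then show ?thesis using core1 True a jj by blast
    next
      case False
      then have jn: "j = n - 1" using a by simp
      have "a (n - 1) \<otimes> (x (n - 1) t \<otimes> h ((t + 1) mod m)) = a (n - 1) \<otimes> (x (n - 1) t' \<otimes> h ((t' + 1) mod m))"
        using Pr2 a jj jn by metis
      then have "x (n - 1) t \<otimes> h ((t + 1) mod m) = x (n - 1) t' \<otimes> h ((t' + 1) mod m)"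
        by (rule cancel_left) (use aC xC hC a mpos in auto)
      then show ?thesis using core2 a jj by blast
    qed
  qed
  define gp where "gp k = g k \<otimes> g ((k + 1) mod NN)" for k
  have gpinj: "inj_on gp {0..<NN}"
  proof (rule inj_onI)
    fix k k' assume k: "k \<in> {0..<NN}" "k' \<in> {0..<NN}" "gp k = gp k'"
    then have "Pr (k mod n) (k div n) = Pr (k' mod n) (k' div n)" using gnext unfolding gp_def by simp
    moreover have kk: "k mod n < n" "k div n < m" "k' mod n < n" "k' div n < m" using kd k by auto
    ultimately have "k mod n = k' mod n \<and> k div n = k' div n"
      using Prinj[OF kk(1) kk(3) kk(2) kk(4)] by blast
    then show "k = k'" using kd k by (metis atLeastLessThan_iff)
  qed
  have gpC: "\<And>k. k < NN \<Longrightarrow> gp k \<in> carrier G" unfolding gp_def using gnext PrC kd by simp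
  have gpbij: "bij_betw gp {0..<NN} (carrier G)"
    by (rule bij_from_inj[OF gpinj]) (use gpC assms(2) NN_def in auto)
  have gsym: "\<And>k. 1 \<le> k \<Longrightarrow> k \<le> NN - 1 \<Longrightarrow> g k \<otimes> g (NN - k) = \<one>"
  proof -
    fix k assume k: "1 \<le> k" "k \<le> NN - 1"
    have kN: "k < NN" using k by simp
    obtain j t where jt0: "j = k mod n" "t = k div n" by blast
    have jt: "j < n" "t < m" "k = j + n * t" using kd[OF kN] jt0 by auto
    have si: "(NN - k) mod n = (if j = 0 then 0 else n - j) \<and> (NN - k) div n = (if j = 0 then m - t else m - 1 - t)"
      using sym_idx[of k n m] kN k NN jt0 by simp
    have gk0: "g k = F j t" unfolding g_def jt0 ..
    show "g k \<otimes> g (NN - k) = \<one>"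
    proof (cases "j = 0")
      case True
      then have t1: "1 \<le> t" using jt k by (cases t) auto
      have e1: "(NN - k) mod n = 0" "(NN - k) div n = m - t" using si True by auto
      have gk2: "g (NN - k) = F 0 (m - t)" unfolding g_def e1 ..
      have mt: "m - t < m" using t1 jt by simp
      have f1: "F 0 t = h t" unfolding F_def x_def s_def a0 P0 using hC[OF jt(2)] by simp
      have f2: "F 0 (m - t) = h (m - t)" unfolding F_def x_def s_def a0 P0 using hC[OF mt] by simp
      show ?thesis unfolding gk0 gk2 True f1 f2 by (rule hsym[OF t1 jt(2)])
    next
      case False
      define t2 where "t2 = m - 1 - t"
      have t2: "t2 < m" using t2_def mpos by simp
      have jpos: "1 \<le> j" using False by simp
      have e1: "(NN - k) mod n = n - j" "(NN - k) div n = t2" using si False t2_def by auto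
      have Pj: "P j = P (j - 1) \<otimes> a j" using PS[of "j - 1"] jpos by simp
      have gk: "g k = a j \<otimes> inv (P (j - 1) \<otimes> a j) \<otimes> x j t \<otimes> (P (j - 1) \<otimes> a j)"
        unfolding gk0 F_def Pj ..
      have an: "a (n - j) = inv (a j)" using ainv jpos jt by simp
      have pn: "P (n - j) = P (j - 1)" using Pnj jpos jt by simp
      have gk2: "g (NN - k) = inv (a j) \<otimes> inv (P (j - 1)) \<otimes> x (n - j) t2 \<otimes> P (j - 1)"
        unfolding g_def e1 F_def an pn ..
      have xx: "x j t \<otimes> x (n - j) t2 = \<one>"
      proof (cases "j \<le> r")
        case True
        then have "\<not> n - j \<le> r" using r by simp
        then have e: "x j t = h t" "x (n - j) t2 = h ((m - t) mod m)"
          unfolding x_def s_def t2_def using True jt mpos Suc_diff_Suc[OF jt(2)] by auto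
        show ?thesis
        proof (cases "t = 0")
          case True
          have "(m - t) mod m = 0" using True by simp
          then show ?thesis unfolding e using True h0 by simp
        next
          case False
          have "(m - t) mod m = m - t" using False jt by simp
          then show ?thesis unfolding e using hsym[of t] False jt by simp
        qed
      next
        case False
        then have "n - j \<le> r" using r jt by simp
        then have e: "x j t = h ((t + 1) mod m)" "x (n - j) t2 = h (m - (t + 1))"
          unfolding x_def s_def t2_def using False jt by auto
        show ?thesis
        proof (cases "t + 1 = m")
          case True
          have "(t + 1) mod m = 0" "m - (t + 1) = 0" using True by simp_all
          then show ?thesis unfolding e using h0 by simp
        next
          case False
          have "(t + 1) mod m = t + 1" using False jt by simp
          then show ?thesis unfolding e using hsym[of "t + 1"] False jt by simp
        qed
      qed
      have "g k \<otimes> g (NN - k) = inv (P (j - 1)) \<otimes> (x j t \<otimes> x (n - j) t2) \<otimes> P (j - 1)"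
        unfolding gk gk2 using aC PC xC jt t2 by (simp add: m_assoc inv_mult_group canc1 canc2)
      then show ?thesis using xx PC by simp
    qed
  qed
  have gpeq: "gp = (\<lambda>i. g i \<otimes> g ((i + 1) mod NN))" by (rule ext) (simp only: gp_def)
  have hs: "harmonious_seq G g"
    unfolding harmonious_seq_def Let_def NN_def[symmetric] using gbij gpbij unfolding gpeq by (rule conjI)
  have all: "\<forall>i. 1 \<le> i \<and> i \<le> NN - 1 \<longrightarrow> g i \<otimes> g (NN - i) = \<one>"
  proof (intro allI impI)
    fix i assume i: "1 \<le> i \<and> i \<le> NN - 1"
    show "g i \<otimes> g (NN - i) = \<one>" by (rule gsym) (use i in auto)
  qed
  show ?thesis
    unfolding symmetric_harmonious_def NN_def[symmetric] by (rule exI[of _ g], rule conjI[OF hs all])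
qed

end
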